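(* Let $\mathbb{P}$ be a pre-Pawlikowski lattice and let $\sigma$ be a strategy for Player I in the game $\mathsf{G}_{\mathrm{fin}}(\mathbb{V}_1,\mathbb{V}_1)$. If $\mathsf{S}_{\mathrm{fin}}(\mathbb{V}_1,\mathbb{V}_1)$ holds, then there is a play $(A_0,F_0,A_1,F_1,\dots)$ according to $\sigma$ such that for every $p\in\mathbb{P}\setminus\{1\}$ we have $\sup F_n\not\leq p$ for infinitely many $n$.
   Context: A lattice is a poset where any two elements have a supremum and an infimum; it is bounded if it has a minimum $0$ and a maximum $1$. A prime element is $q\neq 1$ with: $a\wedge b\leq q$ implies $a\leq q$ or $b\leq q$. Enough prime elements: whenever $a\not\leq b$ there is a prime $q$ with $b\leq q$, $a\not\leq q$. A pre-Pawlikowski lattice is a bounded lattice with enough prime elements. $\mathbb{V}_1$ is the family of subsets $A\subseteq\mathbb{P}$ with $\sup A=1$. $\mathsf{S}_{\mathrm{fin}}(\mathbb{V}_1,\mathbb{V}_1)$: for every sequence $(A_n)_{n\in\omega}$ in $\mathbb{V}_1$ there are finite $F_n\subseteq A_n$ with $\sup\bigcup_n F_n=1$. The game $\mathsf{G}_{\mathrm{fin}}(\mathbb{V}_1,\mathbb{V}_1)$: in inning $n\in\omega$ Player I plays $A_n\in\mathbb{V}_1$ and Player II responds with a finite $F_n\subseteq A_n$; II wins if $\sup\bigcup_n F_n=1$. A strategy for Player I assigns Player I's move to each finite sequence of Player II's previous moves; a play is according to $\sigma$ if each $A_n$ is the value of $\sigma$ at $(F_0,\dots,F_{n-1})$. For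 a finite set $F$, $\sup F$ is its join (with $\sup\emptyset=0$). *)

theory Defs
  imports Main
begin

text \<open>The lattice is a type of class bounded_lattice (bot = 0, top = 1).\<close>

definition is_sup_top :: "'a::bounded_lattice set \<Rightarrow> bool" where
  "is_sup_top A \<longleftrightarrow> (\<forall>u. (\<forall>a\<in>A. a \<le> u) \<longrightarrow> u = top)"

definition V1 :: "'a::bounded_lattice set set" where
  "V1 = {A. is_sup_top A}"

definition prime_el :: "'a::bounded_lattice \<Rightarrow> bool" where
  "prime_el q \<longleftrightarrow> q \<noteq> top \<and> (\<forall>a b. inf a b \<le> q \<longrightarrow> a \<le> q \<or> b \<le> q)"

definition enough_primes :: "'a::bounded_lattice itself \<Rightarrow> bool" where
  "enough_primes _ \<longleftrightarrow> (\<forall>a b::'a. \<not> a \<le> b \<longrightarrow> (\<exists>q. prime_el q \<and> b \<le> q \<and> \<not> a \<le> q))"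

definition pre_pawlikowski :: "'a::bounded_lattice itself \<Rightarrow> bool" where
  "pre_pawlikowski T \<longleftrightarrow> enough_primes T"

definition S_fin_V1 :: "'a::bounded_lattice itself \<Rightarrow> bool" where
  "S_fin_V1 _ \<longleftrightarrow> (\<forall>A :: nat \<Rightarrow> 'a set. (\<forall>n. A n \<in> V1) \<longrightarrow>
      (\<exists>F. (\<forall>n. finite (F n) \<and> F n \<subseteq> A n) \<and> (\<Union>n. F n) \<in> V1))"

definition fsup :: "'a::bounded_lattice set \<Rightarrow> 'a" where
  "fsup F = Finite_Set.fold sup bot F"

text \<open>A strategy for Player I: maps the list of II's previous moves to a move in V1.\<close>
definition strategy_I :: "('a::bounded_lattice set list \<Rightarrow> 'a set) \<Rightarrow> bool" where
  "strategy_I \<sigma> \<longleftrightarrow> (\<forall>s. \<sigma> s \<in> V1)"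

definition play_according :: "('a::bounded_lattice set list \<Rightarrow> 'a set) \<Rightarrow> (nat \<Rightarrow> 'a set) \<Rightarrow> bool" where
  "play_according \<sigma> F \<longleftrightarrow> (\<forall>n. finite (F n) \<and> F n \<subseteq> \<sigma> (map F [0..<n]))"

end

theory Submission
  imports Defs
begin

definition opn :: "('a::bounded_lattice \<Rightarrow> bool) \<Rightarrow> bool" where
  "opn P \<longleftrightarrow> (\<exists>c. \<forall>q. prime_el q \<longrightarrow> (\<not> c \<le> q \<longleftrightarrow> P q))"

lemma prime_not_top: "prime_el (q::'a::bounded_lattice) \<Longrightarrow> \<not> top \<le> q"
  unfolding prime_el_def using top_unique by blast

lemma opn_ex_finite: "finite (A::'a::bounded_lattice set) \<Longrightarrow> opn (\<lambda>q. \<exists>a\<in>A. \<not> a \<le> q)"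
proof (induction A rule: finite_induct)
  case empty show ?case unfolding opn_def by (rule exI[of _ bot]) simp
next
  case (insert a A)
  then obtain c where c: "\<forall>q. prime_el q \<longrightarrow> (\<not> c \<le> q \<longleftrightarrow> (\<exists>a\<in>A. \<not> a \<le> q))"
    unfolding opn_def by blast
  show ?case unfolding opn_def by (rule exI[of _ "sup a c"]) (use c in auto)
qed

lemma opn_Int: assumes "opn P" "opn Q" shows "opn (\<lambda>q::'a::bounded_lattice. P q \<and> Q q)"
proof -
  obtain c where c: "\<forall>q. prime_el q \<longrightarrow> (\<not> c \<le> q \<longleftrightarrow> P q)" using assms(1) opn_def by blast
  obtain d where d: "\<forall>q. prime_el q \<longrightarrow> (\<not> d \<le> q \<longleftrightarrow> Q q)" using assms(2) opn_def by blast
  have "\<forall>q. prime_el q \<longrightarrow> (\<not> inf c d \<le> q \<longleftrightarrow> P q \<and> Q q)"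
  proof (intro allI impI)
    fix q :: 'a assume pq: "prime_el q"
    have "inf c d \<le> q \<longleftrightarrow> c \<le> q \<or> d \<le> q"
      using pq unfolding prime_el_def by (meson le_infI1 le_infI2)
    then show "(\<not> inf c d \<le> q \<longleftrightarrow> P q \<and> Q q)" using c d pq by blast
  qed
  then show ?thesis unfolding opn_def by blast
qed

lemma opn_all_finite: "finite I \<Longrightarrow> (\<forall>i\<in>I. opn (P i)) \<Longrightarrow> opn (\<lambda>q::'a::bounded_lattice. \<forall>i\<in>I. P i q)"
proof (induction I rule: finite_induct)
  case empty show ?case unfolding opn_def by (rule exI[of _ top]) (simp add: prime_not_top)
next
  case (insert i I)
  then have "opn (\<lambda>q. P i q \<and> (\<forall>i\<in>I. P i q))" by (intro opn_Int) auto
  then show ?case by simp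
qed

lemma opn_ex_finite_gen: "finite I \<Longrightarrow> (\<forall>i\<in>I. opn (P i)) \<Longrightarrow> opn (\<lambda>q::'a::bounded_lattice. \<exists>i\<in>I. P i q)"
proof (induction I rule: finite_induct)
  case empty show ?case unfolding opn_def by (rule exI[of _ bot]) simp
next
  case (insert i I)
  then obtain c where c: "\<forall>q. prime_el q \<longrightarrow> (\<not> c \<le> q \<longleftrightarrow> (\<exists>i\<in>I. P i q))"
    unfolding opn_def by auto
  have "opn (P i)" using insert.prems by simp
  then obtain d where d: "\<forall>q. prime_el q \<longrightarrow> (\<not> d \<le> q \<longleftrightarrow> P i q)" unfolding opn_def by blast
  show ?case unfolding opn_def by (rule exI[of _ "sup d c"]) (use c d in auto)
qed

lemma V1_prime:
  assumes ep: "enough_primes TYPE('a::bounded_lattice)"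
  shows "(A::'a set) \<in> V1 \<longleftrightarrow> (\<forall>q. prime_el q \<longrightarrow> (\<exists>a\<in>A. \<not> a \<le> q))"
proof
  assume "A \<in> V1"
  then have st: "\<And>u. (\<forall>a\<in>A. a \<le> u) \<Longrightarrow> u = top" unfolding V1_def is_sup_top_def by blast
  show "\<forall>q. prime_el q \<longrightarrow> (\<exists>a\<in>A. \<not> a \<le> q)"
  proof (intro allI impI)
    fix q :: 'a assume "prime_el q"
    then have "q \<noteq> top" unfolding prime_el_def by blast
    then show "\<exists>a\<in>A. \<not> a \<le> q" using st by blast
  qed
next
  assume H: "\<forall>q. prime_el q \<longrightarrow> (\<exists>a\<in>A. \<not> a \<le> q)"
  show "A \<in> V1" unfolding V1_def is_sup_top_def
  proof (intro CollectI allI impI)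
    fix u assume ub: "\<forall>a\<in>A. a \<le> u"
    show "u = top"
    proof (rule ccontr)
      assume "u \<noteq> top"
      then have "\<not> top \<le> u" using top_unique by blast
      then obtain q where q: "prime_el q" "u \<le> q" using ep unfolding enough_primes_def by blast
      then obtain a where "a \<in> A" "\<not> a \<le> q" using H by blast
      then show False using ub q order_trans by blast
    qed
  qed
qed

lemma ex_bound_finite0:
  fixes P :: "'b \<Rightarrow> nat \<Rightarrow> bool"
  shows "finite I \<Longrightarrow> (\<forall>i\<in>I. \<exists>k. \<forall>k'\<ge>k. P i k') \<Longrightarrow> \<exists>k. \<forall>i\<in>I. \<forall>k'\<ge>k. P i k'"
proof (induction I rule: finite_induct)
  case empty then show ?case by simp
next
  case (insert i I)
  obtain k1 where k1: "\<forall>j\<in>I. \<forall>k'\<ge>k1. P j k'" using insert.IH insert.prems by blast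
  obtain k2 where k2: "\<forall>k'\<ge>k2. P i k'" using insert.prems by blast
  show ?case using k1 k2 by (intro exI[of _ "max k1 k2"]) auto
qed

lemma ex_bound_finite:
  fixes P :: "'b \<Rightarrow> nat \<Rightarrow> bool"
  assumes "finite I" "\<forall>i\<in>I. \<exists>k. \<forall>k'\<ge>k. P i k'"
  shows "\<exists>k. \<forall>i\<in>I. P i k"
proof -
  obtain k where "\<forall>i\<in>I. \<forall>k'\<ge>k. P i k'" using ex_bound_finite0[OF assms] by blast
  then show ?thesis by blast
qed

lemma menger1:
  fixes P :: "nat \<Rightarrow> nat \<Rightarrow> 'a::bounded_lattice \<Rightarrow> bool"
  assumes ep: "enough_primes TYPE('a)" and sf: "S_fin_V1 TYPE('a)"
    and op: "\<And>n j. opn (P n j)"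
    and mo: "\<And>n j j' q. j \<le> j' \<Longrightarrow> prime_el q \<Longrightarrow> P n j q \<Longrightarrow> P n j' q"
    and cv: "\<And>n q. prime_el q \<Longrightarrow> \<exists>j. P n j q"
  shows "\<exists>h. \<forall>q. prime_el q \<longrightarrow> (\<exists>n. P n (h n) q)"
proof -
  have "\<forall>p. \<exists>c. \<forall>q. prime_el q \<longrightarrow> (\<not> c \<le> q \<longleftrightarrow> P (fst p) (snd p) q)"
  proof
    fix p :: "nat \<times> nat"
    show "\<exists>c. \<forall>q. prime_el q \<longrightarrow> (\<not> c \<le> q \<longleftrightarrow> P (fst p) (snd p) q)"
      using op[of "fst p" "snd p"] unfolding opn_def .
  qed
  from choice[OF this] obtain r0 where r0: "\<forall>p. \<forall>q. prime_el q \<longrightarrow> (\<not> r0 p \<le> q \<longleftrightarrow> P (fst p) (snd p) q)"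
    by blast
  define r where "r n j = r0 (n, j)" for n j
  have r: "\<And>n j q. prime_el q \<Longrightarrow> (\<not> r n j \<le> q \<longleftrightarrow> P n j q)"
    unfolding r_def using r0 by fastforce
  have A: "\<forall>n. range (r n) \<in> V1"
  proof
    fix n
    have "\<forall>q. prime_el q \<longrightarrow> (\<exists>a\<in>range (r n). \<not> a \<le> q)"
    proof (intro allI impI)
      fix q :: 'a assume pq: "prime_el q"
      then obtain j where "P n j q" using cv by blast
      then have "\<not> r n j \<le> q" using r pq by blast
      then show "\<exists>a\<in>range (r n). \<not> a \<le> q" by blast
    qed
    then show "range (r n) \<in> V1" using V1_prime[OF ep] by blast
  qed
  have "\<exists>F. (\<forall>n. finite (F n) \<and> F n \<subseteq> range (r n)) \<and> (\<Union>n. F n) \<in> V1"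
    using sf[unfolded S_fin_V1_def, THEN spec[of _ "\<lambda>n. range (r n)"], THEN mp, OF A] .
  then obtain F where F: "\<forall>n. finite (F n) \<and> F n \<subseteq> range (r n)" "(\<Union>n. F n) \<in> V1"
    by blast
  have "\<forall>n. \<exists>J. finite J \<and> F n \<subseteq> r n ` J"
  proof
    fix n
    have fn: "finite (F n)" and sn: "F n \<subseteq> r n ` UNIV" using F(1) by auto
    obtain C where "finite C" "F n = r n ` C" using finite_subset_image[OF fn sn] by blast
    then show "\<exists>J. finite J \<and> F n \<subseteq> r n ` J" by blast
  qed
  from choice[OF this] obtain J where J0: "\<forall>n. finite (J n) \<and> F n \<subseteq> r n ` J n" by blast
  have J: "\<And>n. finite (J n)" "\<And>n. F n \<subseteq> r n ` J n" using J0 by auto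
  define h where "h n = Max (insert 0 (J n))" for n
  have FV: "\<forall>q. prime_el q \<longrightarrow> (\<exists>a\<in>(\<Union>n. F n). \<not> a \<le> q)"
    using V1_prime[OF ep, THEN iffD1, OF F(2)] .
  have "\<forall>q. prime_el q \<longrightarrow> (\<exists>n. P n (h n) q)"
  proof (intro allI impI)
    fix q :: 'a assume pq: "prime_el q"
    then obtain a where a: "a \<in> (\<Union>n. F n)" "\<not> a \<le> q" using FV by blast
    then obtain n where an: "a \<in> F n" by blast
    then obtain j where j: "j \<in> J n" "a = r n j" using J(2) by blast
    have jh: "j \<le> h n" unfolding h_def using J(1) j(1) by simp
    have "P n j q" using r[OF pq, of n j] a(2) j(2) by simp
    then have "P n (h n) q" using mo[OF jh pq] by blast
    then show "\<exists>n. P n (h n) q" by blast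
  qed
  then show ?thesis by blast
qed

lemma menger_inf:
  fixes P :: "nat \<Rightarrow> nat \<Rightarrow> 'a::bounded_lattice \<Rightarrow> bool"
  assumes ep: "enough_primes TYPE('a)" and sf: "S_fin_V1 TYPE('a)"
    and op: "\<And>n j. opn (P n j)"
    and mo: "\<And>n j j' q. j \<le> j' \<Longrightarrow> prime_el q \<Longrightarrow> P n j q \<Longrightarrow> P n j' q"
    and cv: "\<And>n q. prime_el q \<Longrightarrow> \<exists>j. P n j q"
  shows "\<exists>h. \<forall>q. prime_el q \<longrightarrow> (\<forall>N. \<exists>n\<ge>N. P n (h n) q)"
proof -
  have "\<forall>N. \<exists>h. \<forall>q. prime_el q \<longrightarrow> (\<exists>n. P (n+N) (h n) q)"
  proof
    fix N
    show "\<exists>h. \<forall>q. prime_el q \<longrightarrow> (\<exists>n. P (n+N) (h n) q)"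
      by (rule menger1[OF ep sf, of "\<lambda>n. P (n+N)"]) (use op mo cv in auto)
  qed
  then obtain hh where hh: "\<And>N q. prime_el q \<Longrightarrow> \<exists>n. P (n+N) (hh N n) q" by metis
  define h where "h n = (\<Sum>N\<le>n. hh N (n - N))" for n
  have "\<forall>q. prime_el q \<longrightarrow> (\<forall>N. \<exists>n\<ge>N. P n (h n) q)"
  proof (intro allI impI)
    fix q :: 'a and N assume pq: "prime_el q"
    obtain n where n: "P (n+N) (hh N n) q" using hh pq by blast
    have "hh N ((n+N) - N) \<le> h (n+N)" unfolding h_def
      by (rule member_le_sum) auto
    then have "P (n+N) (h (n+N)) q" using mo[OF _ pq n] by simp
    then show "\<exists>n\<ge>N. P n (h n) q" by (intro exI[of _ "n+N"]) auto
  qed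
  then show ?thesis by blast
qed

primrec posn :: "('b list \<Rightarrow> nat \<Rightarrow> 'b) \<Rightarrow> (nat \<Rightarrow> nat) \<Rightarrow> nat \<Rightarrow> 'b list" where
  "posn R c 0 = []"
| "posn R c (Suc n) = posn R c n @ [R (posn R c n) (c n)]"

lemma posn_cong: "(\<forall>i<k. c i = d i) \<Longrightarrow> posn R c k = posn R d k"
  by (induction k) auto

lemma fsup_ge: "finite F \<Longrightarrow> a \<in> F \<Longrightarrow> a \<le> fsup (F::'a::bounded_lattice set)"
proof (induction F rule: finite_induct)
  case empty then show ?case by simp
next
  case (insert x F)
  interpret comp_fun_idem "sup :: 'a \<Rightarrow> 'a \<Rightarrow> 'a" by (fact comp_fun_idem_sup)
  have "fsup (insert x F) = sup x (fsup F)" unfolding fsup_def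
    using insert.hyps(1) by (rule fold_insert_idem)
  then show ?case using insert by (auto intro: le_supI2)
qed

lemma strict_mono_interval:
  fixes b :: "nat \<Rightarrow> nat"
  assumes "strict_mono b" shows "b 0 \<le> n \<Longrightarrow> \<exists>k. b k \<le> n \<and> n < b (Suc k)"
proof (induction n)
  case 0
  have "b 0 < b (Suc 0)" using assms strict_monoD by blast
  then show ?case using 0 by (intro exI[of _ 0]) auto
next
  case (Suc n)
  show ?case
  proof (cases "b 0 \<le> n")
    case True
    then obtain k where k: "b k \<le> n" "n < b (Suc k)" using Suc.IH by blast
    show ?thesis
    proof (cases "Suc n < b (Suc k)")
      case True then show ?thesis using k by (intro exI[of _ k]) auto
    next
      case False
      then have "Suc n = b (Suc k)" using k by auto
      moreover have "b (Suc k) < b (Suc (Suc k))" using assms by (simp add: strict_mono_def)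
      ultimately show ?thesis by (intro exI[of _ "Suc k"]) auto
    qed
  next
    case False
    then have "b 0 = Suc n" using Suc.prems by auto
    moreover have "b 0 < b (Suc 0)" using assms by (simp add: strict_mono_def)
    ultimately show ?thesis by (intro exI[of _ 0]) auto
  qed
qed

theorem proposition2p2:
  fixes \<sigma> :: "'a::bounded_lattice set list \<Rightarrow> 'a set"
  assumes "pre_pawlikowski TYPE('a)"
    and "strategy_I \<sigma>"
    and "S_fin_V1 TYPE('a)"
  shows "\<exists>F. play_according \<sigma> F \<and>
           (\<forall>p::'a. p \<noteq> top \<longrightarrow> infinite {n. \<not> fsup (F n) \<le> p})"
proof -
  have ep: "enough_primes TYPE('a)" using assms(1) unfolding pre_pawlikowski_def .
  have "\<forall>s. \<exists>Fs::nat \<Rightarrow> _. (\<forall>n. finite (Fs n) \<and> Fs n \<subseteq> \<sigma> s) \<and> (\<Union>n. Fs n) \<in> V1"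
  proof
    fix s
    show "\<exists>Fs::nat \<Rightarrow> _. (\<forall>n. finite (Fs n) \<and> Fs n \<subseteq> \<sigma> s) \<and> (\<Union>n. Fs n) \<in> V1"
    proof -
      have "\<forall>n. (\<lambda>n. \<sigma> s) n \<in> V1" using assms(2) unfolding strategy_I_def by blast
      from assms(3)[unfolded S_fin_V1_def, THEN spec[of _ "\<lambda>n. \<sigma> s"], THEN mp, OF this]
      show ?thesis by simp
    qed
  qed
  note ex = this
  define Fs where "Fs s = (SOME G::nat \<Rightarrow> _. (\<forall>n. finite (G n) \<and> G n \<subseteq> \<sigma> s) \<and> (\<Union>n. G n) \<in> V1)" for s
  have Fs0: "\<forall>s. (\<forall>n. finite (Fs s n) \<and> Fs s n \<subseteq> \<sigma> s) \<and> (\<Union>n. Fs s n) \<in> V1"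
  proof
    fix s
    show "(\<forall>n. finite (Fs s n) \<and> Fs s n \<subseteq> \<sigma> s) \<and> (\<Union>n. Fs s n) \<in> V1"
      unfolding Fs_def by (rule someI_ex[OF ex[rule_format, of s]])
  qed
  have Fs: "\<And>s n. finite (Fs s n)" "\<And>s n. Fs s n \<subseteq> \<sigma> s" "\<And>s. (\<Union>n. Fs s n) \<in> V1"
    using Fs0 by simp_all
  define resp where "resp s k = (\<Union>i<k. Fs s i)" for s k
  have resp_fin: "\<And>s k. finite (resp s k)" unfolding resp_def using Fs(1) by auto
  have resp_sub: "\<And>s k. resp s k \<subseteq> \<sigma> s" unfolding resp_def using Fs(2) by auto
  have resp_mono: "\<And>s k k'. k \<le> k' \<Longrightarrow> resp s k \<subseteq> resp s k'" unfolding resp_def by (intro UN_mono) auto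
  define cov where "cov q s k \<longleftrightarrow> (\<exists>a\<in>resp s k. \<not> a \<le> q)" for q :: 'a and s k
  have cov_mono: "\<And>q s k k'. k \<le> k' \<Longrightarrow> cov q s k \<Longrightarrow> cov q s k'"
  proof -
    fix q s k k' assume kk: "k \<le> k'" and c: "cov q s k"
    then obtain a where "a \<in> resp s k" "\<not> a \<le> q" unfolding cov_def by blast
    then have "a \<in> resp s k'" "\<not> a \<le> q" using resp_mono[OF kk] by auto
    then show "cov q s k'" unfolding cov_def by blast
  qed
  have cov_ex: "\<And>q s. prime_el q \<Longrightarrow> \<exists>k. cov q s k"
  proof -
    fix q :: 'a and s assume "prime_el q"
    then obtain a where "a \<in> (\<Union>n. Fs s n)" "\<not> a \<le> q"
      using V1_prime[OF ep, THEN iffD1, OF Fs(3)[of s]] by blast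
    then obtain i where "a \<in> Fs s i" "\<not> a \<le> q" by blast
    then have "cov q s (Suc i)" unfolding cov_def resp_def by auto
    then show "\<exists>k. cov q s k" by blast
  qed
  define pl where "pl xs = posn resp (\<lambda>i. xs ! i) (length xs)" for xs
  define L where "L m = {xs. set xs \<subseteq> {..m} \<and> length xs \<le> m}" for m :: nat
  have L_fin: "\<And>m. finite (L m)" unfolding L_def by (rule finite_lists_length_le) simp
  have L_mono: "\<And>m m'. m \<le> m' \<Longrightarrow> L m \<subseteq> L m'" unfolding L_def by auto
  define Ob where "Ob m j q \<longleftrightarrow> (\<forall>xs\<in>L m. cov q (pl xs) j)" for m j and q :: 'a
  have Ob_opn: "\<And>m j. opn (Ob m j)"
  proof -
    fix m j
    have "\<forall>xs\<in>L m. opn (\<lambda>q::'a. cov q (pl xs) j)"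
    proof
      fix xs
      show "opn (\<lambda>q::'a. cov q (pl xs) j)" unfolding cov_def by (rule opn_ex_finite[OF resp_fin])
    qed
    then have "opn (\<lambda>q::'a. \<forall>xs\<in>L m. cov q (pl xs) j)"
      by (rule opn_all_finite[OF L_fin])
    then show "opn (Ob m j)" unfolding Ob_def[abs_def] .
  qed
  have Ob_anti: "\<And>m m' j q. m \<le> m' \<Longrightarrow> Ob m' j q \<Longrightarrow> Ob m j q"
  proof -
    fix m m' j q assume mm: "m \<le> m'" and o: "Ob m' j q"
    show "Ob m j q" unfolding Ob_def
    proof
      fix xs assume "xs \<in> L m"
      then have "xs \<in> L m'" using L_mono[OF mm] by (rule subsetD[rotated])
      then show "cov q (pl xs) j" using o unfolding Ob_def by (rule bspec[rotated])
    qed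
  qed
  have Ob_mono: "\<And>m j j' q. j \<le> j' \<Longrightarrow> Ob m j q \<Longrightarrow> Ob m j' q"
  proof -
    fix m j j' q assume jj: "j \<le> j'" and o: "Ob m j q"
    show "Ob m j' q" unfolding Ob_def
    proof
      fix xs assume "xs \<in> L m"
      then have "cov q (pl xs) j" using o unfolding Ob_def by (rule bspec[rotated])
      then show "cov q (pl xs) j'" by (rule cov_mono[OF jj])
    qed
  qed
  have Ob_ex: "\<And>m q. prime_el q \<Longrightarrow> \<exists>j. Ob m j q"
  proof -
    fix m and q :: 'a assume pq: "prime_el q"
    have "\<forall>xs\<in>L m. \<exists>k. \<forall>k'\<ge>k. cov q (pl xs) k'"
    proof
      fix xs
      obtain k where k: "cov q (pl xs) k" using cov_ex[OF pq] by blast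
      have "\<forall>k'\<ge>k. cov q (pl xs) k'"
      proof (intro allI impI)
        fix k' assume "k \<le> k'" then show "cov q (pl xs) k'" using k by (rule cov_mono)
      qed
      then show "\<exists>k. \<forall>k'\<ge>k. cov q (pl xs) k'" by blast
    qed
    from ex_bound_finite[OF L_fin this] obtain k where "\<forall>xs\<in>L m. cov q (pl xs) k" by (elim exE)
    then have "Ob m k q" unfolding Ob_def .
    then show "\<exists>j. Ob m j q" by (rule exI)
  qed
  define W where "W n j q \<longleftrightarrow> (\<exists>m\<in>{..j}. Ob n m q \<and> Ob m j q)" for n j and q :: 'a
  have W_opn: "\<And>n j. opn (W n j)"
  proof -
    fix n j
    have "\<forall>m\<in>{..j}. opn (\<lambda>q::'a. Ob n m q \<and> Ob m j q)"
    proof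
      fix m show "opn (\<lambda>q::'a. Ob n m q \<and> Ob m j q)" by (rule opn_Int[OF Ob_opn Ob_opn])
    qed
    then have "opn (\<lambda>q::'a. \<exists>m\<in>{..j}. Ob n m q \<and> Ob m j q)"
      by (rule opn_ex_finite_gen[OF finite_atMost])
    then show "opn (W n j)" unfolding W_def[abs_def] .
  qed
  have W_mono: "\<And>n j j' q. j \<le> j' \<Longrightarrow> prime_el q \<Longrightarrow> W n j q \<Longrightarrow> W n j' q"
  proof -
    fix n j j' q assume jj: "j \<le> j'" and w: "W n j q"
    then obtain m where m: "m \<le> j" "Ob n m q" "Ob m j q" unfolding W_def by auto
    have "Ob m j' q" using Ob_mono[OF jj m(3)] .
    moreover have "m \<in> {..j'}" using m(1) jj by simp
    ultimately show "W n j' q" unfolding W_def using m(2) by blast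
  qed
  have W_ex: "\<And>n q. prime_el q \<Longrightarrow> \<exists>j. W n j q"
  proof -
    fix n and q :: 'a assume pq: "prime_el q"
    obtain m where m: "Ob n m q" using Ob_ex[OF pq] by blast
    obtain j where j: "Ob m j q" using Ob_ex[OF pq] by blast
    have "Ob m (max m j) q" using Ob_mono[OF _ j] by simp
    then have "W n (max m j) q" unfolding W_def using m by auto
    then show "\<exists>j. W n j q" by blast
  qed
  have "\<exists>h. \<forall>q. prime_el q \<longrightarrow> (\<forall>N. \<exists>n\<ge>N. W n (h n) q)"
    apply (rule menger_inf[OF ep assms(3), of W])
      apply (rule W_opn)
     apply (erule (2) W_mono)
    apply (erule W_ex)
    done
  then obtain h where h0: "\<forall>q. prime_el q \<longrightarrow> (\<forall>N. \<exists>n\<ge>N. W n (h n) q)" by (elim exE)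
  have h: "\<And>q N. prime_el q \<Longrightarrow> \<exists>n\<ge>N. W n (h n) q" using h0 by blast
  define B where "B m = (\<Sum>i\<le>m. h i) + m" for m
  have B_mono: "\<And>m m'. m \<le> m' \<Longrightarrow> B m \<le> B m'"
    unfolding B_def by (intro add_mono sum_mono2) auto
  have h_B: "\<And>m. h m \<le> B m"
  proof -
    fix m
    have "h m \<le> sum h {..m}" by (rule member_le_sum) auto
    then show "h m \<le> B m" unfolding B_def by simp
  qed
  define b where "b k = ((\<lambda>v. B v + 1) ^^ k) 0" for k
  have b0: "b 0 = 0" unfolding b_def by simp
  have bS: "\<And>k. b (Suc k) = B (b k) + 1" unfolding b_def by simp
  have b_B: "\<And>m. m \<le> B m" unfolding B_def by simp
  have b_sm: "strict_mono b"
    unfolding strict_mono_Suc_iff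
  proof
    fix n
    have "b n \<le> B (b n)" by (rule b_B)
    then show "b n < b (Suc n)" unfolding bS by simp
  qed
  have key: "\<And>q N. prime_el q \<Longrightarrow> \<exists>k\<ge>N. Ob (b k) (b (Suc k)) q"
  proof -
    fix q :: 'a and N assume pq: "prime_el q"
    obtain n where n: "n \<ge> b N" "W n (h n) q" using h[OF pq] by blast
    obtain k where k: "b k \<le> n" "n < b (Suc k)" using strict_mono_interval[OF b_sm] b0 by auto
    have kN: "N \<le> k"
    proof -
      have "b N < b (Suc k)" using n(1) k(2) by simp
      then have "N < Suc k" using b_sm strict_mono_less by blast
      then show ?thesis by simp
    qed
    obtain m where m: "m \<le> h n" "Ob n m q" "Ob m (h n) q" using n(2) unfolding W_def by auto
    have hn: "h n \<le> b (Suc (Suc k))"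
      using h_B[of n] B_mono[of n "b (Suc k)"] k(2) bS[of "Suc k"] by simp
    show "\<exists>k\<ge>N. Ob (b k) (b (Suc k)) q"
    proof (cases "b (Suc k) \<le> m")
      case True
      have "Ob (b (Suc k)) (h n) q" using Ob_anti[OF True m(3)] .
      then have "Ob (b (Suc k)) (b (Suc (Suc k))) q" using Ob_mono hn by blast
      then show ?thesis using kN by (intro exI[of _ "Suc k"]) auto
    next
      case False
      have "Ob (b k) m q" using Ob_anti[OF k(1) m(2)] .
      then have "Ob (b k) (b (Suc k)) q" using Ob_mono[of m "b (Suc k)"] False by simp
      then show ?thesis using kN by blast
    qed
  qed
  define c where "c k = b (Suc k)" for k
  define F where "F k = resp (posn resp c k) (c k)" for k
  have posF: "\<And>k. posn resp c k = map F [0..<k]"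
  proof -
    fix k show "posn resp c k = map F [0..<k]" by (induction k) (auto simp: F_def)
  qed
  have play: "play_according \<sigma> F"
    unfolding play_according_def
  proof
    fix n
    have "finite (F n)" unfolding F_def by (rule resp_fin)
    moreover have "F n \<subseteq> \<sigma> (posn resp c n)" unfolding F_def by (rule resp_sub)
    ultimately show "finite (F n) \<and> F n \<subseteq> \<sigma> (map F [0..<n])" by (simp only: posF)
  qed
  have cover: "\<And>q N. prime_el q \<Longrightarrow> \<exists>k\<ge>N. \<not> fsup (F k) \<le> q"
  proof -
    fix q :: 'a and N assume pq: "prime_el q"
    obtain k where k: "k \<ge> N" "Ob (b k) (b (Suc k)) q" using key[OF pq] by blast
    let ?xs = "map c [0..<k]"
    have inL: "?xs \<in> L (b k)"
    proof -
      have "\<forall>i<k. c i \<le> b k"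
      proof (intro allI impI)
        fix i assume "i < k" then have "Suc i \<le> k" by simp
        then show "c i \<le> b k" unfolding c_def using strict_mono_less_eq[OF b_sm] by blast
      qed
      moreover have "k \<le> b k" using b_sm by (simp add: strict_mono_imp_increasing)
      ultimately show ?thesis unfolding L_def by auto
    qed
    have "pl ?xs = posn resp c k" unfolding pl_def
      by (simp add: posn_cong)
    then have "cov q (posn resp c k) (c k)" using k(2) inL unfolding Ob_def c_def by metis
    then obtain a where "a \<in> F k" "\<not> a \<le> q" unfolding cov_def F_def by blast
    then have "\<not> fsup (F k) \<le> q" using fsup_ge[OF resp_fin[of "posn resp c k" "c k"]]
      unfolding F_def by (meson order_trans)
    then show "\<exists>k\<ge>N. \<not> fsup (F k) \<le> q" using k(1) by blast
  qed
  have "\<forall>p::'a. p \<noteq> top \<longrightarrow> infinite {n. \<not> fsup (F n) \<le> p}"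
  proof (intro allI impI)
    fix p :: 'a assume "p \<noteq> top"
    then have "\<not> top \<le> p" using top_unique by blast
    then obtain q where q: "prime_el q" "p \<le> q" using ep unfolding enough_primes_def by blast
    have "\<forall>N. \<exists>n\<ge>N. n \<in> {n. \<not> fsup (F n) \<le> p}"
    proof
      fix N
      obtain n where n: "n \<ge> N" "\<not> fsup (F n) \<le> q" using cover[OF q(1)] by blast
      have "\<not> fsup (F n) \<le> p"
      proof
        assume "fsup (F n) \<le> p" then have "fsup (F n) \<le> q" using q(2) by (rule order_trans)
        then show False using n(2) by simp
      qed
      then show "\<exists>n\<ge>N. n \<in> {n. \<not> fsup (F n) \<le> p}" using n(1) by blast
    qed
    then show "infinite {n. \<not> fsup (F n) \<le> p}"
    proof -
      assume U: "\<forall>N. \<exists>n\<ge>N. n \<in> {n. \<not> fsup (F n) \<le> p}"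
      show ?thesis
      proof
        assume "finite {n. \<not> fsup (F n) \<le> p}"
        then obtain m where m: "\<forall>n\<in>{n. \<not> fsup (F n) \<le> p}. n \<le> m"
          unfolding finite_nat_set_iff_bounded_le by blast
        obtain n where "n \<ge> Suc m" "n \<in> {n. \<not> fsup (F n) \<le> p}" using U by blast
        then show False using m by fastforce
      qed
    qed
  qed
  then show ?thesis using play by blast
qed

end
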